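(* Let $n\ge1$ and $t\ge1$ be integers, and let $\Gamma_{\le t}=\{a\subseteq[n]: 0<|a|\le t\}$. Let $M_t$ be the real matrix with rows and columns indexed by $\Gamma_{\le t}$ and entries $M_t[a,b]=2^{|a\cap b|}$. Then $M_t$ is positive definite. *)

theory Defs
  imports Complex_Main
begin

definition pos_def_on :: "'i set \<Rightarrow> ('i \<Rightarrow> 'i \<Rightarrow> real) \<Rightarrow> bool" where
  "pos_def_on I M \<longleftrightarrow>
     (\<forall>a\<in>I. \<forall>b\<in>I. M a b = M b a) \<and>
     (\<forall>x :: 'i \<Rightarrow> real. (\<exists>a\<in>I. x a \<noteq> 0) \<longrightarrow>
        (\<Sum>a\<in>I. \<Sum>b\<in>I. x a * M a b * x b) > 0)"

definition Gamma_le :: "nat \<Rightarrow> nat \<Rightarrow> nat set set" where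
  "Gamma_le n t = {a. a \<subseteq> {1..n} \<and> 0 < card a \<and> card a \<le> t}"

definition M_t :: "nat set \<Rightarrow> nat set \<Rightarrow> real" where
  "M_t a b = 2 ^ card (a \<inter> b)"

end

theory Submission
  imports Defs
begin

lemma pow_count:
  assumes "a \<subseteq> {1..n}" "b \<subseteq> {1..(n::nat)}"
  shows "(2::real) ^ card (a \<inter> b) = (\<Sum>c\<in>Pow {1..n}. (if c \<subseteq> a then 1 else 0) * (if c \<subseteq> b then 1 else 0))"
proof -
  have fin: "finite (a \<inter> b)" using assms finite_subset by blast
  have "(\<Sum>c\<in>Pow {1..n}. (if c \<subseteq> a then 1 else 0) * (if c \<subseteq> b then 1 else (0::real)))
      = (\<Sum>c\<in>Pow {1..n}. if c \<in> Pow (a \<inter> b) then 1 else 0)"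
    by (rule sum.cong) auto
  also have "\<dots> = (\<Sum>c\<in>{c\<in>Pow {1..n}. c \<in> Pow (a \<inter> b)}. 1)"
    by (rule sum.inter_filter[symmetric]) simp
  also have "{c\<in>Pow {1..n}. c \<in> Pow (a \<inter> b)} = Pow (a \<inter> b)" using assms by auto
  also have "(\<Sum>c\<in>Pow (a \<inter> b). (1::real)) = real (card (Pow (a \<inter> b)))" by simp
  also have "real (card (Pow (a \<inter> b))) = 2 ^ card (a \<inter> b)" using card_Pow[OF fin] by (metis of_nat_numeral of_nat_power)
  finally show ?thesis by simp
qed

theorem lemma6:
  fixes n t :: nat
  assumes "n \<ge> 1" and "t \<ge> 1"
  shows "pos_def_on (Gamma_le n t) M_t"
  unfolding pos_def_on_def
proof (intro conjI allI impI ballI)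
  fix a b show "M_t a b = M_t b a" by (simp add: M_t_def Int_commute)
next
  fix x :: "nat set \<Rightarrow> real"
  assume ex: "\<exists>a\<in>Gamma_le n t. x a \<noteq> 0"
  let ?I = "Gamma_le n t"
  let ?P = "Pow {1..n}"
  have finI: "finite ?I" unfolding Gamma_le_def
    by (rule finite_subset[of _ "Pow {1..n}"]) auto
  have sub: "a \<subseteq> {1..n}" if "a \<in> ?I" for a using that unfolding Gamma_le_def by auto
  define y where "y c = (\<Sum>a\<in>?I. if c \<subseteq> a then x a else 0)" for c
  have "(\<Sum>a\<in>?I. \<Sum>b\<in>?I. x a * M_t a b * x b)
      = (\<Sum>a\<in>?I. \<Sum>b\<in>?I. \<Sum>c\<in>?P. (if c \<subseteq> a then x a else 0) * (if c \<subseteq> b then x b else 0))"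
  proof (rule sum.cong[OF refl], rule sum.cong[OF refl])
    fix a b assume ab: "a \<in> ?I" "b \<in> ?I"
    have "x a * M_t a b * x b = x a * (\<Sum>c\<in>?P. (if c \<subseteq> a then 1 else 0) * (if c \<subseteq> b then 1 else 0)) * x b"
      unfolding M_t_def using pow_count[OF sub sub, OF ab] by simp
    also have "\<dots> = (\<Sum>c\<in>?P. (if c \<subseteq> a then x a else 0) * (if c \<subseteq> b then x b else 0))"
      unfolding sum_distrib_left sum_distrib_right by (rule sum.cong) auto
    finally show "x a * M_t a b * x b = (\<Sum>c\<in>?P. (if c \<subseteq> a then x a else 0) * (if c \<subseteq> b then x b else 0))" .
  qed
  also have "\<dots> = (\<Sum>a\<in>?I. \<Sum>c\<in>?P. \<Sum>b\<in>?I. (if c \<subseteq> a then x a else 0) * (if c \<subseteq> b then x b else 0))"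
    by (rule sum.cong[OF refl], rule sum.swap)
  also have "\<dots> = (\<Sum>c\<in>?P. \<Sum>a\<in>?I. \<Sum>b\<in>?I. (if c \<subseteq> a then x a else 0) * (if c \<subseteq> b then x b else 0))"
    by (rule sum.swap)
  also have "\<dots> = (\<Sum>c\<in>?P. (y c)^2)"
    by (simp add: y_def power2_eq_square sum_product)
  finally have Q: "(\<Sum>a\<in>?I. \<Sum>b\<in>?I. x a * M_t a b * x b) = (\<Sum>c\<in>?P. (y c)^2)" .
  let ?S = "{a\<in>?I. x a \<noteq> 0}"
  have "finite ?S" "?S \<noteq> {}" using finI ex by auto
  then obtain a0 where a0: "a0 \<in> ?S" and mx: "\<And>a. a \<in> ?S \<Longrightarrow> card a \<le> card a0"
  proof -
    have "Max (card ` ?S) \<in> card ` ?S" using Max_in[of "card ` ?S"] \<open>finite ?S\<close> \<open>?S \<noteq> {}\<close> by blast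
    then obtain a0 where h2: "Max (card ` ?S) = card a0" and h1: "a0 \<in> ?S" by (rule imageE)
    have h3: "card a \<le> card a0" if aS: "a \<in> ?S" for a
    proof -
      have "card a \<in> card ` ?S" using aS by (rule imageI)
      then have "card a \<le> Max (card ` ?S)" by (rule Max_ge[OF finite_imageI[OF \<open>finite ?S\<close>]])
      then show ?thesis using h2 by simp
    qed
    show ?thesis by (rule that[OF h1 h3])
  qed
  have yeq: "y a0 = (\<Sum>a\<in>?I. if a = a0 then x a else 0)"
    unfolding y_def
  proof (intro sum.cong refl)
    fix a assume aI: "a \<in> ?I"
    show "(if a0 \<subseteq> a then x a else 0) = (if a = a0 then x a else 0)"
    proof (cases "a0 \<subseteq> a \<and> a \<noteq> a0")
      case True
      have "finite a" using sub[OF aI] finite_subset by blast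
      then have "card a0 < card a" using True psubset_card_mono by blast
      then have "x a = 0" using mx aI by fastforce
      then show ?thesis by simp
    next
      case False
      then show ?thesis by auto
    qed
  qed
  have "(\<Sum>a\<in>?I. if a = a0 then x a else 0) = x a0" using a0 finI by simp
  with yeq have ya: "y a0 = x a0" by simp
  have finP: "finite ?P" by simp
  have a0P: "a0 \<in> ?P" using a0 sub by auto
  have pos: "0 < (y a0)^2" using ya a0 by simp
  have "0 < (\<Sum>c\<in>?P. (y c)^2)"
    by (rule sum_pos2[of ?P a0 "\<lambda>c. (y c)^2", OF finP a0P pos]) simp
  then show "0 < (\<Sum>a\<in>?I. \<Sum>b\<in>?I. x a * M_t a b * x b)" using Q by simp
qed

end
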